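(* Let $\Lambda\in P^+$. Fix $p\in\mathbb{N}$, $\mathbf{b}=(b_1,\dots,b_p)\in\mathbb{N}^p$ with $\sum_ib_i=n$, and pairwise distinct $\nu^1,\dots,\nu^p\in I$; let $\widetilde\nu=(\nu^1,\dots,\nu^1,\dots,\nu^p,\dots,\nu^p)\in I^n$ ($b_i$ copies of $\nu^i$) and $\beta=\sum_ib_i\alpha_{\nu^i}$. Then for each $1\le i\le p$ there is an element $q_i\in\mathcal{P}_{\widetilde\nu_{\le c_{i-1}+1}}$ which is a polynomial in $\mathrm{x}_{c_{i-1}+1}$ of degree $N_i^\Lambda(\widetilde\nu)$ with invertible leading coefficient and other coefficients in $\mathcal{P}_{\widetilde\nu_{\le c_{i-1}}}$, such that $q_ie(\widetilde\nu)=0$ in $e(\widetilde\nu)R^\Lambda(\beta)e(\widetilde\nu)$.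
   Context: Fix a field $\mathbf{k}$ of characteristic $\neq 2$. A Cartan superdatum consists of an index set $I$; a symmetrizable generalized Cartan matrix $A=(a_{ij})_{i,j\in I}$ ($a_{ii}=2$, $a_{ij}\le 0$ for $i\ne j$, $a_{ij}=0\iff a_{ji}=0$, positive integers $d_i$ with $d_ia_{ij}=d_ja_{ji}$); a free abelian group $P$; $\mathbb{Z}$-linearly independent $\alpha_i\in P$; $h_i\in\mathrm{Hom}_{\mathbb{Z}}(P,\mathbb{Z})$ with $\langle h_i,\alpha_j\rangle=a_{ij}$; and $I=I_{\mathrm{even}}\sqcup I_{\mathrm{odd}}$ with $a_{ij}\in2\mathbb{Z}$ whenever $i\in I_{\mathrm{odd}}$. A symmetric bilinear form $(\cdot|\cdot)$ on $P$ satisfies $(\alpha_i|\lambda)=d_i\langle h_i,\lambda\rangle$. Parity $\mathrm{p}(i)=1$ if $i\in I_{\mathrm{odd}}$, $0$ otherwise. $P^+=\{\Lambda:\langle h_i,\Lambda\rangle\ge0\ \forall i\}$; $I^\beta=\{\nu\in I^n:\sum_s\alpha_{\nu_s}=\beta\}$. For $\nu\in I^m$, $\mathcal{P}_\nu=\mathbf{k}\langle\mathrm{x}_1,\dots,\mathrm{x}_m\rangle/(\mathrm{x}_a\mathrm{x}_b-(-1)^{\mathrm{p}(\nu_a)\mathrm{p}(\nu_b)}\mathrm{x}_b\mathrm{x}_a)$; for $\nu\in I^n$ and $m\le n$, $\nu_{\le m}=(\nu_1,\dots,\nu_m)$ and $\mathcal{P}_{\nu_{\le m}}\subset\mathcal{P}_\nu$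 naturally. Fix $Q_{ij}(\mathrm{x}_1,\mathrm{x}_2)=\sum_{r,s}t_{i,j;(r,s)}\mathrm{x}_1^r\mathrm{x}_2^s\in\mathcal{P}_{(i,j)}$ with: $t_{i,j;(r,s)}\ne0$ only if $-2(\alpha_i|\alpha_j)-r(\alpha_i|\alpha_i)-s(\alpha_j|\alpha_j)=0$; $t_{i,j;(r,s)}=t_{j,i;(s,r)}$; $t_{i,j;(-a_{ij},0)}\in\mathbf{k}^\times$; $t_{i,j;(r,s)}=0$ if $i=j$ or ($i\in I_{\mathrm{odd}}$ and $r$ odd). $R(\beta)$ is the $\mathbf{k}$-algebra with generators $e(\nu)$ ($\nu\in I^\beta$), $x_1,\dots,x_n$, $\tau_1,\dots,\tau_{n-1}$ and relations: $e(\mu)e(\nu)=\delta_{\mu\nu}e(\nu)$, $\sum_\nu e(\nu)=1$; $x_px_qe(\nu)=(-1)^{\mathrm{p}(\nu_p)\mathrm{p}(\nu_q)}x_qx_pe(\nu)$ ($p\ne q$); $x_pe(\nu)=e(\nu)x_p$; $\tau_ae(\nu)=e(s_a\nu)\tau_a$; $\tau_ax_pe(\nu)=(-1)^{\mathrm{p}(\nu_p)\mathrm{p}(\nu_a)\mathrm{p}(\nu_{a+1})}x_p\tau_ae(\nu)$ ($p\ne a,a+1$); $(\tau_ax_{a+1}-(-1)^{\mathrm{p}(\nu_a)\mathrm{p}(\nu_{a+1})}x_a\tau_a)e(\nu)=(x_{a+1}\tau_a-(-1)^{\mathrm{p}(\nu_a)\mathrm{p}(\nu_{a+1})}\tau_ax_a)e(\nu)=\delta_{\nu_a,\nu_{a+1}}e(\nu)$;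 $\tau_a^2e(\nu)=Q_{\nu_a,\nu_{a+1}}(x_a,x_{a+1})e(\nu)$; $\tau_a\tau_be(\nu)=(-1)^{\mathrm{p}(\nu_a)\mathrm{p}(\nu_{a+1})\mathrm{p}(\nu_b)\mathrm{p}(\nu_{b+1})}\tau_b\tau_ae(\nu)$ ($|a-b|>1$); $(\tau_{a+1}\tau_a\tau_{a+1}-\tau_a\tau_{a+1}\tau_a)e(\nu)$ equals $\frac{Q_{\nu_a,\nu_{a+1}}(x_{a+2},x_{a+1})-Q_{\nu_a,\nu_{a+1}}(x_a,x_{a+1})}{x_{a+2}-x_a}e(\nu)$ if $\nu_a=\nu_{a+2}\in I_{\mathrm{even}}$, $(-1)^{\mathrm{p}(\nu_{a+1})}(x_{a+2}-x_a)\frac{Q_{\nu_a,\nu_{a+1}}(x_{a+2},x_{a+1})-Q_{\nu_a,\nu_{a+1}}(x_a,x_{a+1})}{x_{a+2}^2-x_a^2}e(\nu)$ if $\nu_a=\nu_{a+2}\in I_{\mathrm{odd}}$, $0$ otherwise; $s_a=(a,a+1)$, and $\mathfrak{S}_n$ acts on $I^n$ by $(w\nu)_j=\nu_{w^{-1}(j)}$. For $\Lambda\in P^+$, $R^\Lambda(\beta)=R(\beta)/\langle\sum_{\nu}x_1^{\langle h_{\nu_1},\Lambda\rangle}e(\nu)\rangle$. Elements of $\mathcal{P}_\nu$ act on $R^\Lambda(\beta)e(\nu)$ from the left by substituting $x_j$ for $\mathrm{x}_j$. Notation: $c_0=0$, $c_t=b_1+\dots+b_t$; $N_i^\Lambda(\widetilde\nu)=\langle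 h_{\nu^i},\Lambda-\sum_{j=1}^{c_{i-1}}\alpha_{\widetilde\nu_j}\rangle$. *)

theory Defs
  imports Complex_Main "HOL-Library.Poly_Mapping"
begin

datatype 'i gen = E "'i list" | X nat | T nat

type_synonym ('i, 'k) fa = "'i gen list \<Rightarrow>\<^sub>0 'k"

definition fa_mult :: "('i, 'k::comm_ring_1) fa \<Rightarrow> ('i, 'k) fa \<Rightarrow> ('i, 'k) fa" (infixl "\<odot>" 70) where
  "fa_mult f g = (\<Sum>u\<in>Poly_Mapping.keys f. \<Sum>v\<in>Poly_Mapping.keys g. Poly_Mapping.single (u @ v) (Poly_Mapping.lookup f u * Poly_Mapping.lookup g v))"

definition fa_scal :: "'k::comm_ring_1 \<Rightarrow> ('i, 'k) fa" where
  "fa_scal c = Poly_Mapping.single [] c"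

definition fa_one :: "('i, 'k::comm_ring_1) fa" where
  "fa_one = fa_scal 1"

definition fa_gen :: "'i gen \<Rightarrow> ('i, 'k::comm_ring_1) fa" where
  "fa_gen g = Poly_Mapping.single [g] 1"

definition fa_pow :: "('i, 'k::comm_ring_1) fa \<Rightarrow> nat \<Rightarrow> ('i, 'k) fa" where
  "fa_pow x n = foldr fa_mult (replicate n x) fa_one"

definition fa_over :: "'i gen set \<Rightarrow> ('i, 'k::comm_ring_1) fa set" where
  "fa_over G = {f. Poly_Mapping.keys f \<subseteq> lists G}"

inductive_set fa_ideal :: "'i gen set \<Rightarrow> ('i, 'k::comm_ring_1) fa set \<Rightarrow> ('i, 'k) fa set"
  for G S where
  gen: "r \<in> S \<Longrightarrow> r \<in> fa_ideal G S"
| zero: "0 \<in> fa_ideal G S"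
| add: "u \<in> fa_ideal G S \<Longrightarrow> v \<in> fa_ideal G S \<Longrightarrow> u + v \<in> fa_ideal G S"
| mult: "u \<in> fa_ideal G S \<Longrightarrow> a \<in> fa_over G \<Longrightarrow> c \<in> fa_over G \<Longrightarrow> a \<odot> u \<odot> c \<in> fa_ideal G S"

text \<open>The weight lattice P is the free abelian group of finitely supported functions b to int.\<close>

definition zsmul :: "int \<Rightarrow> ('b \<Rightarrow>\<^sub>0 int) \<Rightarrow> ('b \<Rightarrow>\<^sub>0 int)" where
  "zsmul c x = Poly_Mapping.map (\<lambda>z. c * z) x"

definition cartan_superdatum ::
  "('i \<Rightarrow> 'i \<Rightarrow> int) \<Rightarrow> ('i \<Rightarrow> nat) \<Rightarrow> ('i \<Rightarrow> ('b \<Rightarrow>\<^sub>0 int)) \<Rightarrow> ('i \<Rightarrow> ('b \<Rightarrow>\<^sub>0 int) \<Rightarrow> int) \<Rightarrow> 'i set \<Rightarrow> bool" where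
  "cartan_superdatum A d alpha h Iodd \<longleftrightarrow>
     (\<forall>i. A i i = 2) \<and>
     (\<forall>i j. i \<noteq> j \<longrightarrow> A i j \<le> 0) \<and>
     (\<forall>i j. A i j = 0 \<longleftrightarrow> A j i = 0) \<and>
     (\<forall>i. d i > 0) \<and>
     (\<forall>i j. int (d i) * A i j = int (d j) * A j i) \<and>
     (\<forall>F c. finite F \<longrightarrow> (\<Sum>i\<in>F. zsmul (c i) (alpha i)) = 0 \<longrightarrow> (\<forall>i\<in>F. c i = 0)) \<and>
     (\<forall>i x y. h i (x + y) = h i x + h i y) \<and>
     (\<forall>i j. h i (alpha j) = A i j) \<and>
     (\<forall>i j. i \<in> Iodd \<longrightarrow> even (A i j))"

definition compatible_form ::
  "(('b \<Rightarrow>\<^sub>0 int) \<Rightarrow> ('b \<Rightarrow>\<^sub>0 int) \<Rightarrow> rat) \<Rightarrow> ('i \<Rightarrow> ('b \<Rightarrow>\<^sub>0 int)) \<Rightarrow> ('i \<Rightarrow> ('b \<Rightarrow>\<^sub>0 int) \<Rightarrow> int) \<Rightarrow> ('i \<Rightarrow> nat) \<Rightarrow> bool" where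
  "compatible_form form alpha h d \<longleftrightarrow>
     (\<forall>x y. form x y = form y x) \<and>
     (\<forall>x y z. form (x + y) z = form x z + form y z) \<and>
     (\<forall>i l. form (alpha i) l = of_nat (d i) * of_int (h i l))"

definition par :: "'i set \<Rightarrow> 'i \<Rightarrow> nat" where
  "par Iodd i = (if i \<in> Iodd then 1 else 0)"

text \<open>Conditions on the coefficients t(i,j,r,s) of Q(i,j).\<close>
definition Q_param ::
  "(('b \<Rightarrow>\<^sub>0 int) \<Rightarrow> ('b \<Rightarrow>\<^sub>0 int) \<Rightarrow> rat) \<Rightarrow> ('i \<Rightarrow> ('b \<Rightarrow>\<^sub>0 int)) \<Rightarrow> ('i \<Rightarrow> 'i \<Rightarrow> int) \<Rightarrow> 'i set
    \<Rightarrow> ('i \<Rightarrow> 'i \<Rightarrow> nat \<Rightarrow> nat \<Rightarrow> 'k::field) \<Rightarrow> bool" where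
  "Q_param form alpha A Iodd t \<longleftrightarrow>
     (\<forall>i j r s. t i j r s \<noteq> 0 \<longrightarrow>
        - 2 * form (alpha i) (alpha j) - of_nat r * form (alpha i) (alpha i) - of_nat s * form (alpha j) (alpha j) = 0) \<and>
     (\<forall>i j r s. t i j r s = t j i s r) \<and>
     (\<forall>i j. i \<noteq> j \<longrightarrow> t i j (nat (- A i j)) 0 \<noteq> 0) \<and>
     (\<forall>i r s. t i i r s = 0) \<and>
     (\<forall>i j r s. i \<in> Iodd \<and> odd r \<longrightarrow> t i j r s = 0)"

abbreviation fa_e :: "'i list \<Rightarrow> ('i, 'k::comm_ring_1) fa" where "fa_e \<nu> \<equiv> fa_gen (E \<nu>)"
abbreviation fa_x :: "nat \<Rightarrow> ('i, 'k::comm_ring_1) fa" where "fa_x p \<equiv> fa_gen (X p)"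
abbreviation fa_t :: "nat \<Rightarrow> ('i, 'k::comm_ring_1) fa" where "fa_t a \<equiv> fa_gen (T a)"

text \<open>1-based entries of a sequence, and the action of s_a = (a,a+1).\<close>
definition nth1 :: "'i list \<Rightarrow> nat \<Rightarrow> 'i" where
  "nth1 \<nu> p = \<nu> ! (p - 1)"

definition swap1 :: "nat \<Rightarrow> 'i list \<Rightarrow> 'i list" where
  "swap1 a \<nu> = \<nu>[a - 1 := \<nu> ! a, a := \<nu> ! (a - 1)]"

definition sgn_k :: "nat \<Rightarrow> 'k::comm_ring_1" where
  "sgn_k m = (- 1) ^ m"

definition Q_eval :: "('i \<Rightarrow> 'i \<Rightarrow> nat \<Rightarrow> nat \<Rightarrow> 'k::field) \<Rightarrow> 'i \<Rightarrow> 'i \<Rightarrow> ('i, 'k) fa \<Rightarrow> ('i, 'k) fa \<Rightarrow> ('i, 'k) fa" where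
  "Q_eval t i j u w = (\<Sum>(r, s)\<in>{(r, s). t i j r s \<noteq> 0}. fa_scal (t i j r s) \<odot> fa_pow u r \<odot> fa_pow w s)"

text \<open>(Q(i,j)(u,v) - Q(i,j)(w,v)) / (u - w), written out (u, w commuting even variables).\<close>
definition DD_even :: "('i \<Rightarrow> 'i \<Rightarrow> nat \<Rightarrow> nat \<Rightarrow> 'k::field) \<Rightarrow> 'i \<Rightarrow> 'i \<Rightarrow> ('i, 'k) fa \<Rightarrow> ('i, 'k) fa \<Rightarrow> ('i, 'k) fa \<Rightarrow> ('i, 'k) fa" where
  "DD_even t i j u v w = (\<Sum>(r, s)\<in>{(r, s). t i j r s \<noteq> 0}.
      fa_scal (t i j r s) \<odot> (\<Sum>k<r. fa_pow u k \<odot> fa_pow w (r - 1 - k)) \<odot> fa_pow v s)"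

text \<open>(Q(i,j)(u,v) - Q(i,j)(w,v)) / (u^2 - w^2), written out (only even r occur, u^2, w^2 central).\<close>
definition DD_odd :: "('i \<Rightarrow> 'i \<Rightarrow> nat \<Rightarrow> nat \<Rightarrow> 'k::field) \<Rightarrow> 'i \<Rightarrow> 'i \<Rightarrow> ('i, 'k) fa \<Rightarrow> ('i, 'k) fa \<Rightarrow> ('i, 'k) fa \<Rightarrow> ('i, 'k) fa" where
  "DD_odd t i j u v w = (\<Sum>(r, s)\<in>{(r, s). t i j r s \<noteq> 0}.
      fa_scal (t i j r s) \<odot> (\<Sum>k<r div 2. fa_pow (u \<odot> u) k \<odot> fa_pow (w \<odot> w) (r div 2 - 1 - k)) \<odot> fa_pow v s)"

text \<open>Generators of R(beta) for n = |beta| and index set Ib = I^beta.\<close>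
definition klr_gens :: "nat \<Rightarrow> 'i list set \<Rightarrow> 'i gen set" where
  "klr_gens n Ib = {E \<nu> | \<nu>. \<nu> \<in> Ib} \<union> {X p | p. 1 \<le> p \<and> p \<le> n} \<union> {T a | a. 1 \<le> a \<and> a < n}"

definition klr_rels :: "'i set \<Rightarrow> ('i \<Rightarrow> 'i \<Rightarrow> nat \<Rightarrow> nat \<Rightarrow> 'k::field) \<Rightarrow> nat \<Rightarrow> 'i list set \<Rightarrow> ('i, 'k) fa set" where
  "klr_rels Iodd t n Ib =
     {fa_e \<mu> \<odot> fa_e \<nu> - (if \<mu> = \<nu> then fa_e \<nu> else 0) | \<mu> \<nu>. \<mu> \<in> Ib \<and> \<nu> \<in> Ib}
   \<union> {(\<Sum>\<nu>\<in>Ib. fa_e \<nu>) - fa_one}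
   \<union> {fa_x p \<odot> fa_x q \<odot> fa_e \<nu>
        - fa_scal (sgn_k (par Iodd (nth1 \<nu> p) * par Iodd (nth1 \<nu> q))) \<odot> fa_x q \<odot> fa_x p \<odot> fa_e \<nu>
       | p q \<nu>. \<nu> \<in> Ib \<and> 1 \<le> p \<and> p \<le> n \<and> 1 \<le> q \<and> q \<le> n \<and> p \<noteq> q}
   \<union> {fa_x p \<odot> fa_e \<nu> - fa_e \<nu> \<odot> fa_x p | p \<nu>. \<nu> \<in> Ib \<and> 1 \<le> p \<and> p \<le> n}
   \<union> {fa_t a \<odot> fa_e \<nu> - fa_e (swap1 a \<nu>) \<odot> fa_t a | a \<nu>. \<nu> \<in> Ib \<and> 1 \<le> a \<and> a < n}
   \<union> {fa_t a \<odot> fa_x p \<odot> fa_e \<nu>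
        - fa_scal (sgn_k (par Iodd (nth1 \<nu> p) * par Iodd (nth1 \<nu> a) * par Iodd (nth1 \<nu> (a + 1))))
            \<odot> fa_x p \<odot> fa_t a \<odot> fa_e \<nu>
       | a p \<nu>. \<nu> \<in> Ib \<and> 1 \<le> a \<and> a < n \<and> 1 \<le> p \<and> p \<le> n \<and> p \<noteq> a \<and> p \<noteq> a + 1}
   \<union> {(fa_t a \<odot> fa_x (a + 1)
         - fa_scal (sgn_k (par Iodd (nth1 \<nu> a) * par Iodd (nth1 \<nu> (a + 1)))) \<odot> fa_x a \<odot> fa_t a) \<odot> fa_e \<nu>
        - (if nth1 \<nu> a = nth1 \<nu> (a + 1) then fa_e \<nu> else 0)
       | a \<nu>. \<nu> \<in> Ib \<and> 1 \<le> a \<and> a < n}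
   \<union> {(fa_x (a + 1) \<odot> fa_t a
         - fa_scal (sgn_k (par Iodd (nth1 \<nu> a) * par Iodd (nth1 \<nu> (a + 1)))) \<odot> fa_t a \<odot> fa_x a) \<odot> fa_e \<nu>
        - (if nth1 \<nu> a = nth1 \<nu> (a + 1) then fa_e \<nu> else 0)
       | a \<nu>. \<nu> \<in> Ib \<and> 1 \<le> a \<and> a < n}
   \<union> {fa_t a \<odot> fa_t a \<odot> fa_e \<nu> - Q_eval t (nth1 \<nu> a) (nth1 \<nu> (a + 1)) (fa_x a) (fa_x (a + 1)) \<odot> fa_e \<nu>
       | a \<nu>. \<nu> \<in> Ib \<and> 1 \<le> a \<and> a < n}
   \<union> {fa_t a \<odot> fa_t b \<odot> fa_e \<nu>
        - fa_scal (sgn_k (par Iodd (nth1 \<nu> a) * par Iodd (nth1 \<nu> (a + 1)) * par Iodd (nth1 \<nu> b) * par Iodd (nth1 \<nu> (b + 1))))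
            \<odot> fa_t b \<odot> fa_t a \<odot> fa_e \<nu>
       | a b \<nu>. \<nu> \<in> Ib \<and> 1 \<le> a \<and> a < n \<and> 1 \<le> b \<and> b < n \<and> (a + 1 < b \<or> b + 1 < a)}
   \<union> {(fa_t (a + 1) \<odot> fa_t a \<odot> fa_t (a + 1) - fa_t a \<odot> fa_t (a + 1) \<odot> fa_t a) \<odot> fa_e \<nu>
        - (if nth1 \<nu> a = nth1 \<nu> (a + 2) \<and> nth1 \<nu> a \<notin> Iodd then
             DD_even t (nth1 \<nu> a) (nth1 \<nu> (a + 1)) (fa_x (a + 2)) (fa_x (a + 1)) (fa_x a) \<odot> fa_e \<nu>
           else if nth1 \<nu> a = nth1 \<nu> (a + 2) \<and> nth1 \<nu> a \<in> Iodd then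
             fa_scal (sgn_k (par Iodd (nth1 \<nu> (a + 1)))) \<odot> (fa_x (a + 2) - fa_x a)
               \<odot> DD_odd t (nth1 \<nu> a) (nth1 \<nu> (a + 1)) (fa_x (a + 2)) (fa_x (a + 1)) (fa_x a) \<odot> fa_e \<nu>
           else 0)
       | a \<nu>. \<nu> \<in> Ib \<and> 1 \<le> a \<and> a + 2 \<le> n}"

text \<open>The cyclotomic relation; lam i stands for the pairing of h_i with Lambda.\<close>
definition cyclo_rel :: "('i \<Rightarrow> int) \<Rightarrow> 'i list set \<Rightarrow> ('i, 'k::comm_ring_1) fa" where
  "cyclo_rel lam Ib = (\<Sum>\<nu>\<in>Ib. fa_pow (fa_x 1) (nat (lam (nth1 \<nu> 1))) \<odot> fa_e \<nu>)"

definition Ibeta :: "('i \<Rightarrow> ('b \<Rightarrow>\<^sub>0 int)) \<Rightarrow> nat \<Rightarrow> ('b \<Rightarrow>\<^sub>0 int) \<Rightarrow> 'i list set" where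
  "Ibeta alpha n \<beta> = {\<nu>. length \<nu> = n \<and> (\<Sum>s<n. alpha (\<nu> ! s)) = \<beta>}"

text \<open>The two-sided ideal defining R^Lambda(beta) as a quotient of the free algebra.\<close>
definition cyc_ideal :: "'i set \<Rightarrow> ('i \<Rightarrow> 'i \<Rightarrow> nat \<Rightarrow> nat \<Rightarrow> 'k::field) \<Rightarrow> ('i \<Rightarrow> int) \<Rightarrow> nat \<Rightarrow> 'i list set \<Rightarrow> ('i, 'k) fa set" where
  "cyc_ideal Iodd t lam n Ib = fa_ideal (klr_gens n Ib) (klr_rels Iodd t n Ib \<union> {cyclo_rel lam Ib})"

definition Xgens :: "nat \<Rightarrow> 'i gen set" where
  "Xgens m = {X j | j. 1 \<le> j \<and> j \<le> m}"

definition pol_rels :: "'i set \<Rightarrow> 'i list \<Rightarrow> ('i, 'k::comm_ring_1) fa set" where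
  "pol_rels Iodd \<mu> = {fa_x a \<odot> fa_x b - fa_scal (sgn_k (par Iodd (nth1 \<mu> a) * par Iodd (nth1 \<mu> b))) \<odot> fa_x b \<odot> fa_x a
      | a b. 1 \<le> a \<and> a \<le> length \<mu> \<and> 1 \<le> b \<and> b \<le> length \<mu> \<and> a \<noteq> b}"

text \<open>c represents an invertible element of P_mu.\<close>
definition pol_unit :: "'i set \<Rightarrow> 'i list \<Rightarrow> ('i, 'k::comm_ring_1) fa \<Rightarrow> bool" where
  "pol_unit Iodd \<mu> c \<longleftrightarrow> c \<in> fa_over (Xgens (length \<mu>)) \<and>
     (\<exists>u\<in>fa_over (Xgens (length \<mu>)).
        u \<odot> c - fa_one \<in> fa_ideal (Xgens (length \<mu>)) (pol_rels Iodd \<mu>) \<and>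
        c \<odot> u - fa_one \<in> fa_ideal (Xgens (length \<mu>)) (pol_rels Iodd \<mu>))"

end

theory Submission
  imports Defs "HOL-Library.Multiset"
begin


instantiation list :: (type) monoid_add
begin
definition zero_list_def: "(0::'a list) = []"
definition plus_list_def: "(xs::'a list) + ys = xs @ ys"
instance by standard (auto simp: zero_list_def plus_list_def)
end

lemma sum_monomials: "(\<Sum>u\<in>Poly_Mapping.keys f. Poly_Mapping.single u (Poly_Mapping.lookup f u)) = f"
  by (rule poly_mapping_eqI) (auto simp: lookup_sum lookup_single when_def in_keys_iff)

lemma nil_zero: "[] = (0::'a list)" by (simp add: zero_list_def)

lemma fa_mult_eq [simp]: "fa_mult f g = f * g"
proof -
  have "f * g = (\<Sum>u\<in>Poly_Mapping.keys f. Poly_Mapping.single u (Poly_Mapping.lookup f u)) *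
                (\<Sum>v\<in>Poly_Mapping.keys g. Poly_Mapping.single v (Poly_Mapping.lookup g v))"
    by (simp add: sum_monomials)
  also have "\<dots> = fa_mult f g"
    by (simp add: fa_mult_def sum_distrib_left sum_distrib_right mult_single plus_list_def sum.swap[of _ "Poly_Mapping.keys g"])
  finally show ?thesis by simp
qed

abbreviation sc :: "'k \<Rightarrow> ('i, 'k::comm_ring_1) fa" where "sc c \<equiv> Poly_Mapping.single [] c"

lemma fa_scal_eq [simp]: "fa_scal c = sc c" by (simp add: fa_scal_def)
lemma sc_1 [simp]: "sc 1 = 1" by (subst nil_zero) (rule single_one)
lemma fa_one_eq [simp]: "fa_one = 1"
  by (simp add: fa_one_def)
lemma fa_mult_fun: "fa_mult = times" by (intro ext) simp
lemma fa_pow_eq [simp]: "fa_pow x k = x ^ k"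
  by (induct k) (simp_all add: fa_pow_def fa_mult_fun)

lemma sc_0 [simp]: "sc 0 = 0" by simp
lemma sc_mult: "sc a * sc b = sc (a * b)"
  by (simp add: mult_single plus_list_def del: nil_zero)
lemma sc_add: "sc (a + b) = sc a + sc b" by (simp add: single_add)
lemma sc_uminus: "sc (- a) = - sc a" by (simp add: single_uminus)
lemma sc_diff: "sc (a - b) = sc a - sc b" by (simp add: single_diff)
lemma sc_comm: "sc c * f = f * sc c"
proof -
  have "sc c * f = (\<Sum>u\<in>Poly_Mapping.keys f. sc c * Poly_Mapping.single u (Poly_Mapping.lookup f u))"
    by (subst sum_monomials[symmetric, of f]) (simp add: sum_distrib_left)
  also have "\<dots> = (\<Sum>u\<in>Poly_Mapping.keys f. Poly_Mapping.single u (Poly_Mapping.lookup f u) * sc c)"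
    by (simp add: mult_single plus_list_def mult.commute)
  also have "\<dots> = f * sc c"
    by (subst (3) sum_monomials[symmetric, of f]) (simp add: sum_distrib_right)
  finally show ?thesis .
qed
lemma sc_pm1: "sc ((-1) ^ m) * sc ((-1) ^ m) = (1::('i,'k::comm_ring_1) fa)"
  by (simp add: sc_mult power_mult_distrib[symmetric])

lemma fa_over_0 [simp]: "0 \<in> fa_over G" by (simp add: fa_over_def)
lemma fa_over_sc [simp]: "sc c \<in> fa_over G" by (simp add: fa_over_def)
lemma fa_over_1 [simp]: "1 \<in> fa_over G" by (simp add: fa_over_def zero_list_def)
lemma fa_over_gen: "g \<in> G \<Longrightarrow> fa_gen g \<in> fa_over G" by (simp add: fa_over_def fa_gen_def)
lemma fa_over_add [simp,intro]: "f \<in> fa_over G \<Longrightarrow> g \<in> fa_over G \<Longrightarrow> f + g \<in> fa_over G"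
  using keys_add[of f g] by (auto simp: fa_over_def)
lemma fa_over_uminus [simp,intro]: "f \<in> fa_over G \<Longrightarrow> - f \<in> fa_over G"
  by (auto simp: fa_over_def)
lemma fa_over_diff [simp,intro]: "f \<in> fa_over G \<Longrightarrow> g \<in> fa_over G \<Longrightarrow> f - g \<in> fa_over G"
  by (metis diff_conv_add_uminus fa_over_add fa_over_uminus)
lemma fa_over_mult [simp,intro]: "f \<in> fa_over G \<Longrightarrow> g \<in> fa_over G \<Longrightarrow> f * g \<in> fa_over G"
  using keys_mult[of f g] by (fastforce simp: fa_over_def plus_list_def)
lemma fa_over_sum [intro]: "(\<And>x. x \<in> XX \<Longrightarrow> f x \<in> fa_over G) \<Longrightarrow> sum f XX \<in> fa_over G"
  by (induct XX rule: infinite_finite_induct) auto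
lemma fa_over_pow [simp,intro]: "f \<in> fa_over G \<Longrightarrow> f ^ k \<in> fa_over G"
  by (induct k) auto
lemma fa_over_mono: "f \<in> fa_over G \<Longrightarrow> G \<subseteq> H \<Longrightarrow> f \<in> fa_over H"
  by (auto simp: fa_over_def dest: lists_mono[THEN subsetD])

subsection \<open>ideals and congruence\<close>

lemma id_mult: "u \<in> fa_ideal G S \<Longrightarrow> a \<in> fa_over G \<Longrightarrow> c \<in> fa_over G \<Longrightarrow> a * u * c \<in> fa_ideal G S"
  using fa_ideal.mult[of u G S a c] by simp
lemma id_left: "u \<in> fa_ideal G S \<Longrightarrow> a \<in> fa_over G \<Longrightarrow> a * u \<in> fa_ideal G S"
  using id_mult[of u G S a 1] by simp
lemma id_right: "u \<in> fa_ideal G S \<Longrightarrow> c \<in> fa_over G \<Longrightarrow> u * c \<in> fa_ideal G S"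
  using id_mult[of u G S 1 c] by simp
lemma id_uminus: "u \<in> fa_ideal G S \<Longrightarrow> - u \<in> fa_ideal G S"
  using id_left[of u G S "sc (-1)"] by (simp add: sc_uminus)
lemma id_diff: "u \<in> fa_ideal G S \<Longrightarrow> v \<in> fa_ideal G S \<Longrightarrow> u - v \<in> fa_ideal G S"
  by (metis diff_conv_add_uminus fa_ideal.add id_uminus)
lemma id_sum: "(\<And>x. x \<in> XX \<Longrightarrow> f x \<in> fa_ideal G S) \<Longrightarrow> sum f XX \<in> fa_ideal G S"
  by (induct XX rule: infinite_finite_induct) (auto intro: fa_ideal.zero fa_ideal.add)

definition cg :: "'i gen set \<Rightarrow> ('i, 'k::comm_ring_1) fa set \<Rightarrow> ('i, 'k) fa \<Rightarrow> ('i, 'k) fa \<Rightarrow> bool" where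
  "cg G S f g \<longleftrightarrow> f - g \<in> fa_ideal G S"

lemma cg_refl [simp]: "cg G S f f" by (simp add: cg_def fa_ideal.zero)
lemma cg_sym: "cg G S f g \<Longrightarrow> cg G S g f"
  unfolding cg_def by (drule id_uminus) simp
lemma cg_trans: "cg G S f g \<Longrightarrow> cg G S g h \<Longrightarrow> cg G S f h"
  unfolding cg_def by (drule (1) fa_ideal.add) simp
lemma cg_add: "cg G S f g \<Longrightarrow> cg G S f' g' \<Longrightarrow> cg G S (f + f') (g + g')"
  unfolding cg_def by (drule (1) fa_ideal.add) (simp add: algebra_simps)
lemma cg_left: "cg G S f g \<Longrightarrow> a \<in> fa_over G \<Longrightarrow> cg G S (a * f) (a * g)"
  unfolding cg_def by (drule (1) id_left) (simp add: algebra_simps)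
lemma cg_right: "cg G S f g \<Longrightarrow> a \<in> fa_over G \<Longrightarrow> cg G S (f * a) (g * a)"
  unfolding cg_def by (drule (1) id_right) (simp add: algebra_simps)
lemma cg_sum: "(\<And>x. x \<in> XX \<Longrightarrow> cg G S (f x) (g x)) \<Longrightarrow> cg G S (sum f XX) (sum g XX)"
  unfolding cg_def by (drule id_sum) (simp add: sum_subtractf)
lemma cg_rel: "l - r \<in> S \<Longrightarrow> cg G S l r"
  by (simp add: cg_def fa_ideal.gen)
lemma cg_ideal: "cg G S f g \<Longrightarrow> g \<in> fa_ideal G S \<Longrightarrow> f \<in> fa_ideal G S"
  unfolding cg_def by (drule (1) fa_ideal.add) simp



lemma sc_right: "f * sc c = sc c * f" by (simp add: sc_comm)
lemma sc_mult2: "sc a * (sc b * f) = sc (a * b) * f" by (simp add: sc_mult mult.assoc[symmetric])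
lemma sc_lcomm0: "f * (sc c * g) = sc c * (f * g)" by (metis mult.assoc sc_comm)
lemma sc_lcomm: "fa_gen l * (sc c * g) = sc c * (fa_gen l * g)" "fa_gen l ^ k * (sc c * g) = sc c * (fa_gen l ^ k * g)"
  by (rule sc_lcomm0)+
lemma sc_pow: "sc c ^ j = sc (c ^ j)" by (induct j) (simp_all add: sc_mult)

lemma cg_eq: "cg G S f g \<Longrightarrow> f = f' \<Longrightarrow> g = g' \<Longrightarrow> cg G S f' g'" by simp
lemma cg_mult: "cg G S f g \<Longrightarrow> a \<in> fa_over G \<Longrightarrow> c \<in> fa_over G \<Longrightarrow> cg G S (a * f * c) (a * g * c)"
  by (intro cg_right cg_left)

lemma nth1_swap:
  assumes "length \<nu> = n" "1 \<le> a" "a < n"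
  shows "nth1 (swap1 a \<nu>) a = nth1 \<nu> (a + 1)" "nth1 (swap1 a \<nu>) (a + 1) = nth1 \<nu> a"
    "1 \<le> j \<Longrightarrow> j \<noteq> a \<Longrightarrow> j \<noteq> a + 1 \<Longrightarrow> nth1 (swap1 a \<nu>) j = nth1 \<nu> j"
    "length (swap1 a \<nu>) = n"
  using assms by (auto simp: nth1_def swap1_def nth_list_update)

locale klr =
  fixes Iodd :: "'i set" and t :: "'i \<Rightarrow> 'i \<Rightarrow> nat \<Rightarrow> nat \<Rightarrow> 'k::field"
    and lam :: "'i \<Rightarrow> int" and n :: nat and Ib :: "'i list set" and A :: "'i \<Rightarrow> 'i \<Rightarrow> int"
  assumes swap_closed: "\<nu> \<in> Ib \<Longrightarrow> 1 \<le> a \<Longrightarrow> a < n \<Longrightarrow> swap1 a \<nu> \<in> Ib"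
    and len: "\<nu> \<in> Ib \<Longrightarrow> length \<nu> = n"
    and tfin: "finite {(r, s). t i j r s \<noteq> 0}"
    and tdeg: "t i j r s \<noteq> 0 \<Longrightarrow> i \<noteq> j \<Longrightarrow> s \<le> nat (- A j i) \<and> (s = nat (- A j i) \<longrightarrow> r = 0)"
    and ttop: "i \<noteq> j \<Longrightarrow> t i j 0 (nat (- A j i)) \<noteq> 0"
    and lamnn: "lam i \<ge> 0"
    and Anp: "i \<noteq> j \<Longrightarrow> A i j \<le> 0"
begin

abbreviation "GG \<equiv> klr_gens n Ib"
abbreviation "RS \<equiv> klr_rels Iodd t n Ib \<union> {cyclo_rel lam Ib}"
abbreviation "II \<equiv> fa_ideal GG RS"
abbreviation cc where "cc \<equiv> cg GG RS"

lemma x_in [simp]: "1 \<le> p \<Longrightarrow> p \<le> n \<Longrightarrow> fa_x p \<in> fa_over GG"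
  by (rule fa_over_gen) (auto simp: klr_gens_def)
lemma t_in [simp]: "1 \<le> a \<Longrightarrow> a < n \<Longrightarrow> fa_t a \<in> fa_over GG"
  by (rule fa_over_gen) (auto simp: klr_gens_def)
lemma e_in [simp]: "\<nu> \<in> Ib \<Longrightarrow> fa_e \<nu> \<in> fa_over GG"
  by (rule fa_over_gen) (auto simp: klr_gens_def)
lemma Xgens_sub: "m \<le> n \<Longrightarrow> Xgens m \<subseteq> GG"
  by (auto simp: klr_gens_def Xgens_def)
lemma Xover: "f \<in> fa_over (Xgens m) \<Longrightarrow> m \<le> n \<Longrightarrow> f \<in> fa_over GG"
  using Xgens_sub fa_over_mono by blast

lemma rel: "l - r \<in> klr_rels Iodd t n Ib \<Longrightarrow> cc l r"
  by (rule cg_rel) simp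

lemma R_ee: "\<mu> \<in> Ib \<Longrightarrow> \<nu> \<in> Ib \<Longrightarrow> cc (fa_e \<mu> * fa_e \<nu>) (if \<mu> = \<nu> then fa_e \<nu> else 0)"
  by (rule rel) (unfold klr_rels_def fa_mult_fun fa_scal_eq fa_one_eq, rule UnI1, rule UnI1, rule UnI1, rule UnI1, rule UnI1, rule UnI1, rule UnI1, rule UnI1, rule UnI1, rule UnI1, force)

lemma R_sum: "cc (\<Sum>\<nu>\<in>Ib. fa_e \<nu>) 1"
  by (rule rel) (unfold klr_rels_def fa_mult_fun fa_scal_eq fa_one_eq, rule UnI1, rule UnI1, rule UnI1, rule UnI1, rule UnI1, rule UnI1, rule UnI1, rule UnI1, rule UnI1, rule UnI2, force)

lemma R_cyc: "cc (cyclo_rel lam Ib) 0"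
  by (rule cg_rel) simp

lemma R_xe: "\<nu> \<in> Ib \<Longrightarrow> 1 \<le> p \<Longrightarrow> p \<le> n \<Longrightarrow> cc (fa_x p * fa_e \<nu>) (fa_e \<nu> * fa_x p)"
  by (rule rel) (unfold klr_rels_def fa_mult_fun fa_scal_eq fa_one_eq, rule UnI1, rule UnI1, rule UnI1, rule UnI1, rule UnI1, rule UnI1, rule UnI1, rule UnI2, force)

lemma R_te: "\<nu> \<in> Ib \<Longrightarrow> 1 \<le> a \<Longrightarrow> a < n \<Longrightarrow> cc (fa_t a * fa_e \<nu>) (fa_e (swap1 a \<nu>) * fa_t a)"
  by (rule rel) (unfold klr_rels_def fa_mult_fun fa_scal_eq fa_one_eq, rule UnI1, rule UnI1, rule UnI1, rule UnI1, rule UnI1, rule UnI1, rule UnI2, force)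

lemma R_tx: "\<nu> \<in> Ib \<Longrightarrow> 1 \<le> a \<Longrightarrow> a < n \<Longrightarrow> 1 \<le> p \<Longrightarrow> p \<le> n \<Longrightarrow> p \<noteq> a \<Longrightarrow> p \<noteq> a + 1 \<Longrightarrow>
  cc (fa_t a * fa_x p * fa_e \<nu>)
     (sc (sgn_k (par Iodd (nth1 \<nu> p) * par Iodd (nth1 \<nu> a) * par Iodd (nth1 \<nu> (a + 1)))) * fa_x p * fa_t a * fa_e \<nu>)"
  by (rule rel) (unfold klr_rels_def fa_mult_fun fa_scal_eq fa_one_eq, rule UnI1, rule UnI1, rule UnI1, rule UnI1, rule UnI1, rule UnI2, force)

lemma R_tx2: "\<nu> \<in> Ib \<Longrightarrow> 1 \<le> a \<Longrightarrow> a < n \<Longrightarrow> nth1 \<nu> a \<noteq> nth1 \<nu> (a + 1) \<Longrightarrow>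
  cc ((fa_t a * fa_x (a + 1) - sc (sgn_k (par Iodd (nth1 \<nu> a) * par Iodd (nth1 \<nu> (a + 1)))) * fa_x a * fa_t a) * fa_e \<nu>) 0"
proof (rule rel)
  assume "\<nu> \<in> Ib" "1 \<le> a" "a < n" "nth1 \<nu> a \<noteq> nth1 \<nu> (a + 1)"
  then show "(fa_t a * fa_x (a + 1) - sc (sgn_k (par Iodd (nth1 \<nu> a) * par Iodd (nth1 \<nu> (a + 1)))) * fa_x a * fa_t a) * fa_e \<nu> - 0
    \<in> klr_rels Iodd t n Ib"
    unfolding klr_rels_def fa_mult_eq fa_scal_eq
    by (intro UnI1 UnI2) (rule CollectI, rule exI[of _ a], rule exI[of _ \<nu>], simp)
qed

lemma R_tt: "\<nu> \<in> Ib \<Longrightarrow> 1 \<le> a \<Longrightarrow> a < n \<Longrightarrow>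
  cc (fa_t a * fa_t a * fa_e \<nu>) (Q_eval t (nth1 \<nu> a) (nth1 \<nu> (a + 1)) (fa_x a) (fa_x (a + 1)) * fa_e \<nu>)"
  by (rule rel) (unfold klr_rels_def fa_mult_fun fa_scal_eq fa_one_eq, rule UnI1, rule UnI1, rule UnI2, force)

end



lemma sgn_sq: "sgn_k m * sgn_k m = (1::'k::comm_ring_1)"
  by (simp add: sgn_k_def power_mult_distrib[symmetric])
lemma sgn_nz: "sgn_k m \<noteq> (0::'k::field)"
  by (simp add: sgn_k_def)

lemma cg_0: "cg G S (f - g) 0 \<Longrightarrow> cg G S f g" by (simp add: cg_def)

lemma single_sc: "Poly_Mapping.single u v = sc v * Poly_Mapping.single u 1"
  by (simp add: mult_single plus_list_def del: nil_zero)
lemma single_cons: "Poly_Mapping.single (l # w) (1::'k::comm_ring_1) = fa_gen l * Poly_Mapping.single w 1"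
  by (simp add: fa_gen_def mult_single plus_list_def)
lemma fa_over_single: "w \<in> lists G \<Longrightarrow> Poly_Mapping.single w c \<in> fa_over G"
  by (simp add: fa_over_def)

context klr
begin

lemma L_xpow_e: "\<nu> \<in> Ib \<Longrightarrow> 1 \<le> p \<Longrightarrow> p \<le> n \<Longrightarrow> cc (fa_x p ^ j * fa_e \<nu>) (fa_e \<nu> * fa_x p ^ j)"
proof (induct j)
  case 0 then show ?case by simp
next
  case (Suc j)
  have "cc (fa_x p * (fa_x p ^ j * fa_e \<nu>)) (fa_x p * (fa_e \<nu> * fa_x p ^ j))"
    using Suc by (intro cg_left) auto
  moreover have "cc ((fa_x p * fa_e \<nu>) * fa_x p ^ j) ((fa_e \<nu> * fa_x p) * fa_x p ^ j)"
    using Suc by (intro cg_right R_xe) auto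
  ultimately show ?case
    by (auto simp: mult.assoc intro: cg_trans)
qed

lemma L_word_e: "w \<in> lists (Xgens n) \<Longrightarrow> \<nu> \<in> Ib \<Longrightarrow>
  cc (Poly_Mapping.single w 1 * fa_e \<nu>) (fa_e \<nu> * Poly_Mapping.single w 1)"
proof (induct w)
  case Nil then show ?case by (simp add: nil_zero)
next
  case (Cons l w)
  then obtain p where l: "l = X p" "1 \<le> p" "p \<le> n" by (auto simp: Xgens_def)
  have w: "Poly_Mapping.single w 1 \<in> fa_over GG"
    using Cons Xgens_sub by (intro fa_over_single) (auto dest: lists_mono[THEN subsetD, rotated])
  have "cc (fa_x p * (Poly_Mapping.single w 1 * fa_e \<nu>)) (fa_x p * (fa_e \<nu> * Poly_Mapping.single w 1))"
    using Cons l by (intro cg_left) auto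
  moreover have "cc ((fa_x p * fa_e \<nu>) * Poly_Mapping.single w 1) ((fa_e \<nu> * fa_x p) * Poly_Mapping.single w 1)"
    using Cons l w by (intro cg_right R_xe) auto
  ultimately show ?case
    by (auto simp: mult.assoc single_cons l intro: cg_trans)
qed

end


lemma ring_tx2: "(s::'k::field) * s = 1 \<Longrightarrow> sc s * ((tt * xx - sc s * yy * tt) * ee) = 
     sc s * tt * xx * ee - yy * tt * ee"
  by (simp add: right_diff_distrib left_diff_distrib mult.assoc sc_mult2)
context klr begin
lemma L_tx2:
  assumes "\<nu> \<in> Ib" "1 \<le> a" "a < n" "nth1 \<nu> a \<noteq> nth1 \<nu> (a + 1)"
  shows "cc (fa_x a * fa_t a * fa_e \<nu>)
     (sc (sgn_k (par Iodd (nth1 \<nu> a) * par Iodd (nth1 \<nu> (a + 1)))) * fa_t a * fa_x (a + 1) * fa_e \<nu>)"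
proof -
  define s where "s = (sgn_k (par Iodd (nth1 \<nu> a) * par Iodd (nth1 \<nu> (a + 1))) :: 'k)"
  have ss: "s * s = 1" unfolding s_def by (rule sgn_sq)
  have "cc ((fa_t a * fa_x (a + 1) - sc s * fa_x a * fa_t a) * fa_e \<nu>) 0"
    unfolding s_def using assms by (rule R_tx2)
  then have "cc (sc s * ((fa_t a * fa_x (a + 1) - sc s * fa_x a * fa_t a) * fa_e \<nu>)) (sc s * 0)"
    by (rule cg_left) simp
  then have "cc (sc s * fa_t a * fa_x (a + 1) * fa_e \<nu> - fa_x a * fa_t a * fa_e \<nu>) 0"
    by (simp only: ring_tx2[OF ss] mult_zero_right)
  then show ?thesis unfolding s_def[symmetric] by (rule cg_sym[OF cg_0])
qed
lemma L_xpow_t: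
  assumes "\<nu> \<in> Ib" "1 \<le> a" "a < n" "nth1 \<nu> a \<noteq> nth1 \<nu> (a + 1)"
  shows "cc (fa_x a ^ j * fa_t a * fa_e \<nu>)
     (sc (sgn_k (par Iodd (nth1 \<nu> a) * par Iodd (nth1 \<nu> (a + 1))) ^ j) * fa_t a * fa_x (a + 1) ^ j * fa_e \<nu>)"
proof (induct j)
  case 0 then show ?case by simp
next
  case (Suc j)
  let ?s = "sgn_k (par Iodd (nth1 \<nu> a) * par Iodd (nth1 \<nu> (a + 1))) :: 'k"
  have xa: "fa_x a \<in> fa_over GG" "fa_x (a+1) \<in> fa_over GG" "fa_t a \<in> fa_over GG" "fa_e \<nu> \<in> fa_over GG"
    using assms by auto
  have 1: "cc (fa_x a * (fa_x a ^ j * fa_t a * fa_e \<nu>)) (fa_x a * (sc (?s ^ j) * fa_t a * fa_x (a + 1) ^ j * fa_e \<nu>))"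
    using Suc by (rule cg_left) (use assms in auto)
  have 2: "cc (sc (?s ^ j) * fa_x a * fa_t a * (fa_x (a + 1) ^ j * fa_e \<nu>))
                    (sc (?s ^ j) * fa_x a * fa_t a * (fa_e \<nu> * fa_x (a + 1) ^ j))"
    using assms xa by (intro cg_left[OF L_xpow_e]) auto
  have 3: "cc (sc (?s ^ j) * (fa_x a * fa_t a * fa_e \<nu>) * fa_x (a + 1) ^ j)
                    (sc (?s ^ j) * (sc ?s * fa_t a * fa_x (a + 1) * fa_e \<nu>) * fa_x (a + 1) ^ j)"
    using assms xa by (intro cg_mult[OF L_tx2]) auto
  have 4: "cc (sc (?s ^ j * ?s) * fa_t a * fa_x (a + 1) * (fa_e \<nu> * fa_x (a + 1) ^ j))
                    (sc (?s ^ j * ?s) * fa_t a * fa_x (a + 1) * (fa_x (a + 1) ^ j * fa_e \<nu>))"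
    using assms xa by (intro cg_left[OF cg_sym[OF L_xpow_e]]) auto
  have "cc (fa_x a * (fa_x a ^ j * fa_t a * fa_e \<nu>)) (sc (?s ^ j * ?s) * fa_t a * fa_x (a + 1) * (fa_x (a + 1) ^ j * fa_e \<nu>))"
    apply (rule cg_trans[OF 1])
    apply (rule cg_trans[OF cg_eq[OF 2]], simp add: mult.assoc sc_lcomm, rule refl)
    apply (rule cg_trans[OF cg_eq[OF 3]], simp add: mult.assoc, simp add: mult.assoc)
    apply (rule cg_eq[OF 4], simp add: mult.assoc sc_lcomm sc_mult2, rule refl)
    done
  then show ?case
    by (rule cg_eq) (simp_all add: mult.assoc sc_pow mult.commute)
qed
end

definition sw :: "'i set \<Rightarrow> 'i list \<Rightarrow> nat \<Rightarrow> 'i gen list \<Rightarrow> 'k::comm_ring_1" where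
  "sw Iodd \<mu> a w = prod_list (map (\<lambda>l. case l of X p \<Rightarrow> sgn_k (par Iodd (nth1 \<mu> p) * par Iodd (nth1 \<mu> a) * par Iodd (nth1 \<mu> (a + 1))) | _ \<Rightarrow> 1) w)"

definition gmap :: "'i set \<Rightarrow> 'i list \<Rightarrow> nat \<Rightarrow> ('i, 'k::comm_ring_1) fa \<Rightarrow> ('i, 'k) fa" where
  "gmap Iodd \<mu> a c = (\<Sum>u\<in>Poly_Mapping.keys c. sc (Poly_Mapping.lookup c u * sw Iodd \<mu> a u) * Poly_Mapping.single u 1)"

lemma gmap_over: "c \<in> fa_over G \<Longrightarrow> gmap Iodd \<mu> a c \<in> fa_over G"
  unfolding gmap_def fa_over_def
  by (intro fa_over_sum[unfolded fa_over_def] fa_over_mult[unfolded fa_over_def])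
     (auto simp: fa_over_single[unfolded fa_over_def])

lemma gmap_sc: "gmap Iodd \<mu> a (sc c0) = sc c0"
  by (simp add: gmap_def sw_def nil_zero[symmetric])

lemma monomials_sc: "c = (\<Sum>u\<in>Poly_Mapping.keys c. sc (Poly_Mapping.lookup c u) * Poly_Mapping.single u 1)"
  by (subst single_sc[symmetric]) (simp add: sum_monomials)

context klr begin

lemma L_pass_word:
  assumes "\<mu> \<in> Ib" "1 \<le> a" "a < n"
  shows "w \<in> lists (Xgens (a - 1)) \<Longrightarrow>
    cc (fa_t a * Poly_Mapping.single w 1 * fa_e \<mu>) (sc (sw Iodd \<mu> a w) * Poly_Mapping.single w 1 * fa_t a * fa_e \<mu>)"
proof (induct w)
  case Nil then show ?case by (simp add: sw_def)
next
  case (Cons l w)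
  then obtain p where l: "l = X p" "1 \<le> p" "p \<le> a - 1" by (auto simp: Xgens_def)
  have wn: "w \<in> lists (Xgens n)" using Cons(2) assms by (auto simp: Xgens_def)
  have W: "Poly_Mapping.single w 1 \<in> fa_over GG"
    using wn Xgens_sub by (intro fa_over_single) (auto dest: lists_mono[THEN subsetD, rotated])
  define \<sigma> where "\<sigma> = (sgn_k (par Iodd (nth1 \<mu> p) * par Iodd (nth1 \<mu> a) * par Iodd (nth1 \<mu> (a + 1))) :: 'k)"
  have sw: "sw Iodd \<mu> a (l # w) = \<sigma> * sw Iodd \<mu> a w" by (simp add: sw_def l \<sigma>_def)
  have xp: "fa_x p \<in> fa_over GG" "fa_t a \<in> fa_over GG" "fa_e \<mu> \<in> fa_over GG" using l assms by auto
  have 1: "cc ((fa_t a * fa_x p) * (Poly_Mapping.single w 1 * fa_e \<mu>)) ((fa_t a * fa_x p) * (fa_e \<mu> * Poly_Mapping.single w 1))"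
    by (rule cg_left[OF L_word_e[OF wn assms(1)]]) (simp add: xp)
  have 2: "cc ((fa_t a * fa_x p * fa_e \<mu>) * Poly_Mapping.single w 1) ((sc \<sigma> * fa_x p * fa_t a * fa_e \<mu>) * Poly_Mapping.single w 1)"
    unfolding \<sigma>_def using assms l by (intro cg_right[OF R_tx] W) auto
  have 3: "cc ((sc \<sigma> * fa_x p * fa_t a) * (fa_e \<mu> * Poly_Mapping.single w 1)) ((sc \<sigma> * fa_x p * fa_t a) * (Poly_Mapping.single w 1 * fa_e \<mu>))"
    by (rule cg_left[OF cg_sym[OF L_word_e[OF wn assms(1)]]]) (simp add: xp)
  have 4: "cc ((sc \<sigma> * fa_x p) * (fa_t a * Poly_Mapping.single w 1 * fa_e \<mu>)) ((sc \<sigma> * fa_x p) * (sc (sw Iodd \<mu> a w) * Poly_Mapping.single w 1 * fa_t a * fa_e \<mu>))"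
    using Cons l by (intro cg_left) (auto simp: xp)
  show ?case
    apply (rule cg_trans[OF cg_eq[OF 1]], simp add: single_cons l mult.assoc, rule refl)
    apply (rule cg_trans[OF cg_eq[OF 2]], simp add: mult.assoc, rule refl)
    apply (rule cg_trans[OF cg_eq[OF 3]], simp add: mult.assoc, rule refl)
    apply (rule cg_eq[OF 4], simp add: mult.assoc, simp add: sw[unfolded l] single_cons l mult.assoc sc_lcomm sc_mult2)
    done
qed

lemma L_pass:
  assumes "\<mu> \<in> Ib" "1 \<le> a" "a < n" "c \<in> fa_over (Xgens (a - 1))"
  shows "cc (fa_t a * c * fa_e \<mu>) (gmap Iodd \<mu> a c * fa_t a * fa_e \<mu>)"
proof -
  have "fa_t a * c * fa_e \<mu> = (\<Sum>u\<in>Poly_Mapping.keys c. sc (Poly_Mapping.lookup c u) * (fa_t a * Poly_Mapping.single u 1 * fa_e \<mu>))"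
    by (subst monomials_sc) (simp add: sum_distrib_left sum_distrib_right mult.assoc sc_lcomm0)
  moreover have "gmap Iodd \<mu> a c * fa_t a * fa_e \<mu> = (\<Sum>u\<in>Poly_Mapping.keys c. sc (Poly_Mapping.lookup c u) * (sc (sw Iodd \<mu> a u) * Poly_Mapping.single u 1 * fa_t a * fa_e \<mu>))"
    by (simp add: gmap_def sum_distrib_right mult.assoc sc_mult2)
  moreover have "cc (\<Sum>u\<in>Poly_Mapping.keys c. sc (Poly_Mapping.lookup c u) * (fa_t a * Poly_Mapping.single u 1 * fa_e \<mu>))
     (\<Sum>u\<in>Poly_Mapping.keys c. sc (Poly_Mapping.lookup c u) * (sc (sw Iodd \<mu> a u) * Poly_Mapping.single u 1 * fa_t a * fa_e \<mu>))"
    using assms(4) by (intro cg_sum cg_left[OF L_pass_word[OF assms(1-3)]]) (auto simp: fa_over_def)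
  ultimately show ?thesis by simp
qed

end





lemma regroup:
  fixes F :: "nat \<Rightarrow> nat \<Rightarrow> nat \<Rightarrow> ('i, 'k::comm_ring_1) fa"
  assumes fin: "finite St" and bd: "\<And>r s. (r, s) \<in> St \<Longrightarrow> s \<le> dd"
  shows "(\<Sum>j\<le>N'. \<Sum>(r, s)\<in>St. F j r s * Y ^ (s + j)) =
    (\<Sum>m\<le>N' + dd. (\<Sum>j\<le>N'. \<Sum>(r, s)\<in>St. if s + j = m then F j r s else 0) * Y ^ m)"
proof -
  have "(\<Sum>m\<le>N' + dd. (\<Sum>j\<le>N'. \<Sum>(r, s)\<in>St. if s + j = m then F j r s else 0) * Y ^ m) =
        (\<Sum>m\<le>N' + dd. \<Sum>j\<le>N'. \<Sum>(r, s)\<in>St. if s + j = m then F j r s * Y ^ m else 0)"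
    by (auto simp: sum_distrib_right case_prod_beta intro!: sum.cong)
  also have "\<dots> = (\<Sum>j\<le>N'. \<Sum>(r, s)\<in>St. \<Sum>m\<le>N' + dd. if s + j = m then F j r s * Y ^ m else 0)"
    by (simp only: split_def) (rule trans[OF sum.swap], rule sum.cong[OF refl], rule sum.swap)
  also have "\<dots> = (\<Sum>j\<le>N'. \<Sum>(r, s)\<in>St. F j r s * Y ^ (s + j))"
  proof (intro sum.cong refl)
    fix j p assume j: "j \<in> {..N'}" and p: "p \<in> St"
    obtain r s where rs: "p = (r, s)" by (cases p)
    with p bd have "s \<le> dd" by auto
    with j have "s + j \<in> {..N' + dd}" by auto
    then show "(case p of (r, s) \<Rightarrow> \<Sum>m\<le>N' + dd. if s + j = m then F j r s * Y ^ m else 0) =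
          (case p of (r, s) \<Rightarrow> F j r s * Y ^ (s + j))"
      by (simp add: rs sum.delta)
  qed
  finally show ?thesis by simp
qed

lemma lead:
  fixes F :: "nat \<Rightarrow> nat \<Rightarrow> nat \<Rightarrow> ('i, 'k::comm_ring_1) fa"
  assumes fin: "finite St" and bd: "\<And>r s. (r, s) \<in> St \<Longrightarrow> s \<le> dd \<and> (s = dd \<longrightarrow> r = 0)"
    and top: "(0, dd) \<in> St"
  shows "(\<Sum>j\<le>N'. \<Sum>(r, s)\<in>St. if s + j = N' + dd then F j r s else 0) = F N' 0 dd"
proof -
  have "(\<Sum>j\<le>N'. \<Sum>(r, s)\<in>St. if s + j = N' + dd then F j r s else 0) =
        (\<Sum>j\<le>N'. \<Sum>p\<in>St. if j = N' \<and> p = (0, dd) then F j (fst p) (snd p) else 0)"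
  proof (intro sum.cong refl)
    fix j p assume j: "j \<in> {..N'}" and p: "p \<in> St"
    obtain r s where rs: "p = (r, s)" by (cases p)
    with p bd have "s \<le> dd" "s = dd \<longrightarrow> r = 0" by auto
    with j show "(case p of (r, s) \<Rightarrow> if s + j = N' + dd then F j r s else 0) =
         (if j = N' \<and> p = (0, dd) then F j (fst p) (snd p) else 0)"
      by (auto simp: rs)
  qed
  also have "\<dots> = (\<Sum>j\<le>N'. if j = N' then F j 0 dd else 0)"
  proof (rule sum.cong[OF refl])
    fix j
    show "(\<Sum>p\<in>St. if j = N' \<and> p = (0, dd) then F j (fst p) (snd p) else 0) = (if j = N' then F j 0 dd else 0)"
    proof (cases "j = N'")
      case True then show ?thesis using fin top by (simp add: sum.delta')
    qed simp
  qed
  also have "\<dots> = F N' 0 dd" by simp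
  finally show ?thesis .
qed


context klr begin

lemma L_base:
  assumes "\<nu> \<in> Ib" "1 \<le> n"
  shows "fa_x 1 ^ nat (lam (nth1 \<nu> 1)) * fa_e \<nu> \<in> II"
proof (cases "finite Ib")
  case False
  then have "cc 0 1" using R_sum by simp
  then have m1: "- 1 \<in> II" unfolding cg_def by simp
  have "(- (fa_x 1 ^ nat (lam (nth1 \<nu> 1)) * fa_e \<nu>)) * (- 1) \<in> II"
    using assms by (intro id_left[OF m1]) auto
  then show ?thesis by simp
next
  case True
  have i1: "cyclo_rel lam Ib * fa_e \<nu> \<in> II"
    using R_cyc assms by (intro id_right) (auto simp: cg_def)
  have i2: "cyclo_rel lam Ib * fa_e \<nu> = (\<Sum>\<mu>\<in>Ib. fa_x 1 ^ nat (lam (nth1 \<mu> 1)) * (fa_e \<mu> * fa_e \<nu>))"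
    by (simp add: cyclo_rel_def sum_distrib_right mult.assoc)
  have c: "cc (\<Sum>\<mu>\<in>Ib. fa_x 1 ^ nat (lam (nth1 \<mu> 1)) * (fa_e \<mu> * fa_e \<nu>))
                    (\<Sum>\<mu>\<in>Ib. fa_x 1 ^ nat (lam (nth1 \<mu> 1)) * (if \<mu> = \<nu> then fa_e \<nu> else 0))"
    using assms by (intro cg_sum cg_left[OF R_ee]) auto
  have i3: "(\<Sum>\<mu>\<in>Ib. fa_x 1 ^ nat (lam (nth1 \<mu> 1)) * (if \<mu> = \<nu> then fa_e \<nu> else 0))
      = fa_x 1 ^ nat (lam (nth1 \<nu> 1)) * fa_e \<nu>"
    using True assms by (simp add: if_distrib[where f = "\<lambda>x. _ * x"] sum.delta' cong: if_cong)
  have "(\<Sum>\<mu>\<in>Ib. fa_x 1 ^ nat (lam (nth1 \<mu> 1)) * (if \<mu> = \<nu> then fa_e \<nu> else 0)) \<in> II"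
    by (rule cg_ideal[OF cg_sym[OF c]]) (subst i2[symmetric], rule i1)
  then show ?thesis by (simp only: i3)
qed

end




context klr begin

lemma L_chain:
  assumes \<nu>: "\<nu> \<in> Ib" and a: "1 \<le> a" "a < n" and dif: "nth1 \<nu> a \<noteq> nth1 \<nu> (a + 1)"
    and c: "c \<in> fa_over (Xgens (a - 1))"
  shows "cc (fa_t a * (c * fa_x a ^ j * fa_e (swap1 a \<nu>)) * fa_t a)
    (sc (sgn_k (par Iodd (nth1 \<nu> a) * par Iodd (nth1 \<nu> (a + 1))) ^ j) * gmap Iodd (swap1 a \<nu>) a c
      * Q_eval t (nth1 \<nu> a) (nth1 \<nu> (a + 1)) (fa_x a) (fa_x (a + 1)) * (fa_x (a + 1) ^ j * fa_e \<nu>))"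
proof -
  define \<nu>' where "\<nu>' = swap1 a \<nu>"
  define s where "s = (sgn_k (par Iodd (nth1 \<nu> a) * par Iodd (nth1 \<nu> (a + 1))) :: 'k)"
  define g where "g = gmap Iodd \<nu>' a c"
  define Q where "Q = Q_eval t (nth1 \<nu> a) (nth1 \<nu> (a + 1)) (fa_x a) (fa_x (a + 1))"
  define T where "T = (fa_t a :: ('i, 'k) fa)"
  define x where "x = (fa_x (a + 1) :: ('i, 'k) fa)"
  have \<nu>': "\<nu>' \<in> Ib" unfolding \<nu>'_def using \<nu> a by (rule swap_closed)
  have cG: "c \<in> fa_over GG" using c a by (intro Xover) auto
  have gG: "g \<in> fa_over GG" unfolding g_def using cG by (rule gmap_over)
  have QG: "Q \<in> fa_over GG" unfolding Q_def Q_eval_def using a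
    by (auto intro!: fa_over_sum simp: split_def)
  have mem: "T \<in> fa_over GG" "x \<in> fa_over GG" "fa_x a \<in> fa_over GG" "fa_e \<nu> \<in> fa_over GG" "fa_e \<nu>' \<in> fa_over GG"
    using a \<nu> \<nu>' by (auto simp: T_def x_def)
  have te: "cc (T * fa_e \<nu>) (fa_e \<nu>' * T)" unfolding T_def \<nu>'_def using \<nu> a by (rule R_te)
  have 1: "cc (T * c * fa_x a ^ j * (fa_e \<nu>' * T)) (T * c * fa_x a ^ j * (T * fa_e \<nu>))"
    using mem cG by (intro cg_left[OF cg_sym[OF te]]) auto
  have 2: "cc (T * c * (fa_x a ^ j * T * fa_e \<nu>)) (T * c * (sc (s ^ j) * T * x ^ j * fa_e \<nu>))"
    unfolding T_def x_def s_def using mem cG \<nu> a dif by (intro cg_left[OF L_xpow_t]) (auto simp: T_def sc_pow)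
  have 3: "cc (sc (s ^ j) * T * c * T * (x ^ j * fa_e \<nu>)) (sc (s ^ j) * T * c * T * (fa_e \<nu> * x ^ j))"
    unfolding x_def using mem cG \<nu> a by (intro cg_left[OF L_xpow_e]) (auto simp: T_def)
  have 4: "cc (sc (s ^ j) * T * c * (T * fa_e \<nu>) * x ^ j) (sc (s ^ j) * T * c * (fa_e \<nu>' * T) * x ^ j)"
    using mem cG by (intro cg_mult[OF te]) auto
  have 5: "cc (sc (s ^ j) * (T * c * fa_e \<nu>') * T * x ^ j) (sc (s ^ j) * (g * T * fa_e \<nu>') * T * x ^ j)"
    unfolding g_def T_def using mem \<nu>' a c by (intro cg_right cg_left L_pass) (auto simp: T_def)
  have 6: "cc (sc (s ^ j) * g * T * (fa_e \<nu>' * T) * x ^ j) (sc (s ^ j) * g * T * (T * fa_e \<nu>) * x ^ j)"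
    using mem gG by (intro cg_mult[OF cg_sym[OF te]]) auto
  have 7: "cc (sc (s ^ j) * g * (T * T * fa_e \<nu>) * x ^ j) (sc (s ^ j) * g * (Q * fa_e \<nu>) * x ^ j)"
    unfolding T_def Q_def using mem gG \<nu> a by (intro cg_mult[OF R_tt]) (auto simp: T_def)
  have 8: "cc (sc (s ^ j) * g * Q * (fa_e \<nu> * x ^ j)) (sc (s ^ j) * g * Q * (x ^ j * fa_e \<nu>))"
    unfolding x_def using mem gG QG \<nu> a by (intro cg_left[OF cg_sym[OF L_xpow_e]]) auto
  have "cc (T * (c * fa_x a ^ j * fa_e \<nu>') * T) (sc (s ^ j) * g * Q * (x ^ j * fa_e \<nu>))"
    apply (rule cg_trans[OF cg_eq[OF 1]], simp add: mult.assoc, rule refl)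
    apply (rule cg_trans[OF cg_eq[OF 2]], simp add: mult.assoc, rule refl)
    apply (rule cg_trans[OF cg_eq[OF 3]], simp add: mult.assoc sc_lcomm0[of T] sc_lcomm0[of c], rule refl)
    apply (rule cg_trans[OF cg_eq[OF 4]], simp add: mult.assoc, rule refl)
    apply (rule cg_trans[OF cg_eq[OF 5]], simp add: mult.assoc, rule refl)
    apply (rule cg_trans[OF cg_eq[OF 6]], simp add: mult.assoc, rule refl)
    apply (rule cg_trans[OF cg_eq[OF 7]], simp add: mult.assoc, rule refl)
    apply (rule cg_eq[OF 8], simp add: mult.assoc, rule refl)
    done
  then show ?thesis by (simp add: \<nu>'_def s_def g_def Q_def T_def x_def sc_pow)
qed


lemma L_step:
  assumes \<nu>: "\<nu> \<in> Ib" and a: "1 \<le> a" "a < n" and dif: "nth1 \<nu> a \<noteq> nth1 \<nu> (a + 1)"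
    and cf: "\<forall>j\<le>N'. coef' j \<in> fa_over (Xgens (a - 1))"
    and P: "(\<Sum>j\<le>N'. coef' j * fa_x a ^ j) * fa_e (swap1 a \<nu>) \<in> II"
    and c0: "coef' N' = sc c0" "c0 \<noteq> 0"
  shows "\<exists>coef c1. c1 \<noteq> 0 \<and> coef (N' + nat (- A (nth1 \<nu> (a + 1)) (nth1 \<nu> a))) = sc c1 \<and>
     (\<forall>j\<le>N' + nat (- A (nth1 \<nu> (a + 1)) (nth1 \<nu> a)). coef j \<in> fa_over (Xgens a)) \<and>
     (\<Sum>j\<le>N' + nat (- A (nth1 \<nu> (a + 1)) (nth1 \<nu> a)). coef j * fa_x (a + 1) ^ j) * fa_e \<nu> \<in> II"
proof -
  define i0 where "i0 = nth1 \<nu> a"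
  define i1 where "i1 = nth1 \<nu> (a + 1)"
  define dd where "dd = nat (- A i1 i0)"
  define \<nu>' where "\<nu>' = swap1 a \<nu>"
  define s where "s = (sgn_k (par Iodd i0 * par Iodd i1) :: 'k)"
  define St where "St = {(r, s). t i0 i1 r s \<noteq> 0}"
  define gg where "gg j = gmap Iodd \<nu>' a (coef' j)" for j
  define F where "F j r s' = sc (s ^ j * t i0 i1 r s') * gg j * fa_x a ^ r" for j r s'
  define coef where "coef m = (\<Sum>j\<le>N'. \<Sum>(r, s')\<in>St. if s' + j = m then F j r s' else 0)" for m
  have i01: "i0 \<noteq> i1" using dif by (simp add: i0_def i1_def)
  have fin: "finite St" unfolding St_def by (rule tfin)
  have bd: "s' \<le> dd \<and> (s' = dd \<longrightarrow> r = 0)" if "(r, s') \<in> St" for r s'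
    using tdeg[of i0 i1 r s'] that i01 by (simp add: St_def dd_def)
  have top: "(0, dd) \<in> St" using ttop[OF i01] by (simp add: St_def dd_def)
  have \<nu>': "\<nu>' \<in> Ib" unfolding \<nu>'_def using \<nu> a by (rule swap_closed)
  have T: "fa_t a \<in> fa_over GG" using a by simp
  have TPT: "fa_t a * ((\<Sum>j\<le>N'. coef' j * fa_x a ^ j) * fa_e \<nu>') * fa_t a \<in> II"
    using P T unfolding \<nu>'_def by (intro id_mult) auto
  have eq1: "fa_t a * ((\<Sum>j\<le>N'. coef' j * fa_x a ^ j) * fa_e \<nu>') * fa_t a =
     (\<Sum>j\<le>N'. fa_t a * (coef' j * fa_x a ^ j * fa_e \<nu>') * fa_t a)"
    by (simp add: sum_distrib_left sum_distrib_right)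
  have cc1: "cc (\<Sum>j\<le>N'. fa_t a * (coef' j * fa_x a ^ j * fa_e \<nu>') * fa_t a)
     (\<Sum>j\<le>N'. sc (s ^ j) * gg j * Q_eval t i0 i1 (fa_x a) (fa_x (a + 1)) * (fa_x (a + 1) ^ j * fa_e \<nu>))"
    using cf unfolding \<nu>'_def gg_def s_def i0_def i1_def
    by (intro cg_sum L_chain[OF \<nu> a dif]) auto
  have eq2: "sc (s ^ j) * gg j * Q_eval t i0 i1 (fa_x a) (fa_x (a + 1)) * (fa_x (a + 1) ^ j * fa_e \<nu>) =
     (\<Sum>(r, s')\<in>St. F j r s' * fa_x (a + 1) ^ (s' + j)) * fa_e \<nu>" for j
    by (simp add: Q_eval_def St_def[symmetric] F_def sum_distrib_left sum_distrib_right case_prod_beta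
        mult.assoc sc_lcomm0[of "gg j"] sc_mult2 power_add)
  have eq3: "(\<Sum>j\<le>N'. (\<Sum>(r, s')\<in>St. F j r s' * fa_x (a + 1) ^ (s' + j)) * fa_e \<nu>) =
     (\<Sum>j\<le>N' + dd. coef j * fa_x (a + 1) ^ j) * fa_e \<nu>"
    unfolding coef_def
    by (simp only: sum_distrib_right[symmetric] regroup[OF fin, of dd, OF conjunct1[OF bd]])
  have target: "(\<Sum>j\<le>N' + dd. coef j * fa_x (a + 1) ^ j) * fa_e \<nu> \<in> II"
    using cg_ideal[OF cg_sym[OF cc1]] TPT eq1 eq2 eq3 by simp
  have lc: "coef (N' + dd) = sc (s ^ N' * t i0 i1 0 dd * c0)"
    unfolding coef_def
    by (simp add: lead[OF fin bd top] F_def gg_def c0 gmap_sc sc_mult)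
  have nz: "s ^ N' * t i0 i1 0 dd * c0 \<noteq> 0"
    using c0(2) ttop[OF i01] by (simp add: s_def sgn_nz dd_def)
  have cm: "coef m \<in> fa_over (Xgens a)" for m
  proof -
    have "gg j \<in> fa_over (Xgens a)" if "j \<le> N'" for j
      using cf that unfolding gg_def
      by (intro gmap_over) (auto intro: fa_over_mono simp: Xgens_def)
    moreover have "fa_x a \<in> fa_over (Xgens a)" using a by (intro fa_over_gen) (auto simp: Xgens_def)
    ultimately show ?thesis unfolding coef_def F_def
      by (auto intro!: fa_over_sum fa_over_mult fa_over_pow simp: split_def)
  qed
  show ?thesis
    using target lc nz cm unfolding dd_def i0_def i1_def by blast
qed


definition NN :: "'i list \<Rightarrow> nat \<Rightarrow> nat" where
  "NN \<nu> k = nat (lam (nth1 \<nu> k) - (\<Sum>j=1..k-1. A (nth1 \<nu> k) (nth1 \<nu> j)))"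

lemma claim:
  "1 \<le> k \<Longrightarrow> k \<le> n \<Longrightarrow> \<nu> \<in> Ib \<Longrightarrow> (\<forall>j. 1 \<le> j \<and> j < k \<longrightarrow> nth1 \<nu> j \<noteq> nth1 \<nu> k) \<Longrightarrow>
   \<exists>coef c0. c0 \<noteq> 0 \<and> coef (NN \<nu> k) = sc c0 \<and> (\<forall>j\<le>NN \<nu> k. coef j \<in> fa_over (Xgens (k - 1))) \<and>
     (\<Sum>j\<le>NN \<nu> k. coef j * fa_x k ^ j) * fa_e \<nu> \<in> II"
proof (induct k arbitrary: \<nu>)
  case 0 then show ?case by simp
next
  case (Suc a)
  show ?case
  proof (cases "a = 0")
    case True
    define N where "N = NN \<nu> 1"
    have N: "N = nat (lam (nth1 \<nu> 1))" by (simp add: N_def NN_def)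
    have "(\<Sum>j\<le>N. (if j = N then 1 else 0) * fa_x 1 ^ j) * fa_e \<nu> \<in> II"
      using L_base[OF Suc(4)] Suc(3) True by (simp add: N if_distrib[where f = "\<lambda>x. x * _"] cong: if_cong)
    then show ?thesis using True unfolding N_def[symmetric]
      by (intro exI[of _ "\<lambda>j. if j = N then 1 else 0"] exI[of _ 1]) (auto simp: N_def)
  next
    case False
    then have a: "1 \<le> a" "a < n" using Suc by auto
    define \<nu>' where "\<nu>' = swap1 a \<nu>"
    have len: "length \<nu> = n" using Suc(4) by (rule len)
    have \<nu>': "\<nu>' \<in> Ib" unfolding \<nu>'_def using Suc(4) a by (rule swap_closed)
    note sw = nth1_swap[OF len a, folded \<nu>'_def]
    have dist: "\<forall>j. 1 \<le> j \<and> j < a \<longrightarrow> nth1 \<nu>' j \<noteq> nth1 \<nu>' a"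
      using Suc(5) sw by auto
    obtain coef' c0 where c0: "c0 \<noteq> 0" "coef' (NN \<nu>' a) = sc c0"
      and cf: "\<forall>j\<le>NN \<nu>' a. coef' j \<in> fa_over (Xgens (a - 1))"
      and P: "(\<Sum>j\<le>NN \<nu>' a. coef' j * fa_x a ^ j) * fa_e \<nu>' \<in> II"
      using Suc(1)[OF a(1) _ \<nu>' dist] a by auto
    have dif: "nth1 \<nu> a \<noteq> nth1 \<nu> (a + 1)" using Suc(5) a by auto
    have NN: "NN \<nu> (Suc a) = NN \<nu>' a + nat (- A (nth1 \<nu> (a + 1)) (nth1 \<nu> a))"
    proof -
      let ?i1 = "nth1 \<nu> (a + 1)"
      have S: "(\<Sum>j=1..a-1. A ?i1 (nth1 \<nu>' j)) = (\<Sum>j=1..a-1. A ?i1 (nth1 \<nu> j))"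
        using sw by (intro sum.cong) auto
      have Snp: "(\<Sum>j=1..a-1. A ?i1 (nth1 \<nu> j)) \<le> 0"
        using Suc(5) by (intro sum_nonpos Anp) auto
      have S2: "(\<Sum>j=1..a. A ?i1 (nth1 \<nu> j)) = (\<Sum>j=1..a-1. A ?i1 (nth1 \<nu> j)) + A ?i1 (nth1 \<nu> a)"
        using a by (cases a) (auto simp: sum.cl_ivl_Suc)
      have "A ?i1 (nth1 \<nu> a) \<le> 0" using dif by (intro Anp) auto
      moreover have "lam ?i1 \<ge> 0" by (rule lamnn)
      moreover have "NN \<nu> (Suc a) = nat (lam ?i1 - ((\<Sum>j=1..a-1. A ?i1 (nth1 \<nu> j)) + A ?i1 (nth1 \<nu> a)))"
        unfolding NN_def using S2 by simp
      moreover have "NN \<nu>' a = nat (lam ?i1 - (\<Sum>j=1..a-1. A ?i1 (nth1 \<nu> j)))"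
        unfolding NN_def using S sw by simp
      moreover have "\<And>L S0 B::int. B \<le> 0 \<Longrightarrow> 0 \<le> L \<Longrightarrow> S0 \<le> 0 \<Longrightarrow> nat (L - (S0 + B)) = nat (L - S0) + nat (- B)"
        by arith
      ultimately show ?thesis using Snp by simp
    qed
    have P2: "(\<Sum>j\<le>NN \<nu>' a. coef' j * fa_x a ^ j) * fa_e (swap1 a \<nu>) \<in> II"
      using P by (simp add: \<nu>'_def)
    show ?thesis
      using L_step[OF Suc(4) a dif cf P2 c0(2) c0(1)] unfolding NN by simp
  qed
qed

end




lemma h_hom:
  fixes hh :: "'a::ab_group_add \<Rightarrow> int"
  assumes add: "\<forall>x y. hh (x + y) = (hh x + hh y :: int)"
  shows "hh 0 = 0" "hh (- x) = - hh x" "hh (x - y) = hh x - hh y" "hh (sum f S) = (\<Sum>s\<in>S. hh (f s))"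
proof -
  show h0: "hh 0 = 0" using add[rule_format, of 0 0] by simp
  show hm: "hh (- x) = - hh x" for x using add[rule_format, of x "- x"] h0 by simp
  show "hh (x - y) = hh x - hh y" using add[rule_format, of x "- y"] hm[of y] by simp
  show "hh (sum f S) = (\<Sum>s\<in>S. hh (f s))"
    by (induct S rule: infinite_finite_induct) (simp_all add: h0 add)
qed

lemma lookup_zsmul: "Poly_Mapping.lookup (zsmul c x) k = c * Poly_Mapping.lookup x k"
  by (simp add: zsmul_def Poly_Mapping.map.rep_eq when_def)

lemma lookup_sum_list_rep: "Poly_Mapping.lookup (sum_list (replicate m x)) k = int m * Poly_Mapping.lookup x k"
  by (induct m) (simp_all add: lookup_add algebra_simps)

lemma zsmul_rep: "zsmul (int m) x = sum_list (replicate m x)"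
  by (rule poly_mapping_eqI) (simp add: lookup_zsmul lookup_sum_list_rep)

lemma sum_list_concat': "sum_list (concat xss) = sum_list (map sum_list xss)"
  by (induct xss) simp_all

lemma sum_nth_list: "length \<nu> = n \<Longrightarrow> (\<Sum>s<n. f (\<nu> ! s)) = sum_list (map f \<nu>)"
  by (simp add: sum_list_sum_nth atLeast0LessThan)

lemma Ibeta_swap:
  assumes "\<nu> \<in> Ibeta alpha n \<beta>" "1 \<le> a" "a < n"
  shows "swap1 a \<nu> \<in> Ibeta alpha n \<beta>"
proof -
  have len: "length \<nu> = n" using assms by (simp add: Ibeta_def)
  have m: "mset (swap1 a \<nu>) = mset \<nu>"
    unfolding swap1_def using len assms by (intro mset_swap) auto
  have "sum_list (map alpha (swap1 a \<nu>)) = sum_list (map alpha \<nu>)"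
    by (metis m mset_map sum_mset_sum_list)
  moreover have "length (swap1 a \<nu>) = n" using len by (simp add: swap1_def)
  ultimately show ?thesis using assms len by (simp add: Ibeta_def sum_nth_list)
qed

lemma blocks_split:
  assumes "1 \<le> i" "i \<le> p"
  shows "concat (map L [1..<p + 1]) = concat (map L [1..<i]) @ L i @ concat (map L [Suc i..<p + 1])"
proof -
  have "[1..<p + 1] = [1..<i] @ [i..<p + 1]"
    using upt_add_eq_append[of 1 i "p + 1 - i"] assms by simp
  also have "[i..<p + 1] = i # [Suc i..<p + 1]" using assms by (simp add: upt_conv_Cons)
  finally show ?thesis by simp
qed

lemma blocks_len: "length (concat (map (\<lambda>l. replicate (b l) (nus l)) [1..<m])) = (\<Sum>l\<in>{1..<m}. b l)"
  by (simp add: length_concat sum_set_upt_conv_sum_list_nat[symmetric] o_def)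

lemma blocks_set: "set (concat (map (\<lambda>l. replicate (b l) (nus l)) [1..<m])) \<subseteq> nus ` {1..<m}"
  by auto

lemma blocks_alpha: "sum_list (map alpha (concat (map (\<lambda>l. replicate (b l) (nus l)) [1..<p + 1]))) =
    (\<Sum>i=1..p. zsmul (int (b i)) (alpha (nus i)))"
proof -
  have "sum_list (map alpha (concat (map (\<lambda>l. replicate (b l) (nus l)) [1..<p + 1]))) =
     sum_list (map (\<lambda>l. sum_list (replicate (b l) (alpha (nus l)))) [1..<p + 1])"
    by (simp add: map_concat sum_list_concat' o_def del: upt_Suc)
  also have "\<dots> = (\<Sum>l\<in>{1..<p + 1}. sum_list (replicate (b l) (alpha (nus l))))"
    by (rule sum_set_upt_conv_sum_list_nat[symmetric, unfolded set_upt])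
  also have "\<dots> = (\<Sum>i=1..p. zsmul (int (b i)) (alpha (nus i)))"
    by (simp add: zsmul_rep atLeastLessThanSuc_atLeastAtMost)
  finally show ?thesis .
qed


lemma t_eq:
  assumes datum: "cartan_superdatum A d alpha h Iodd"
    and frm: "compatible_form form alpha h d"
    and Q: "Q_param form alpha A Iodd t"
    and nz: "t i j r s \<noteq> 0"
  shows "int r * int (d i) + int s * int (d j) = - (int (d i) * A i j)"
proof -
  have e: "- 2 * form (alpha i) (alpha j) - of_nat r * form (alpha i) (alpha i) - of_nat s * form (alpha j) (alpha j) = 0"
    using Q nz unfolding Q_param_def by blast
  have f: "form (alpha x) (alpha y) = of_nat (d x) * of_int (A x y)" for x y
    using frm datum unfolding compatible_form_def cartan_superdatum_def by simp
  have A2: "A x x = 2" for x using datum unfolding cartan_superdatum_def by simp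
  have "(of_int (int r * int (d i) + int s * int (d j) + int (d i) * A i j) :: rat) * (- 2) = 0"
    using e by (simp add: f A2 algebra_simps)
  then have "(of_int (int r * int (d i) + int s * int (d j) + int (d i) * A i j) :: rat) = 0" by simp
  then have "int r * int (d i) + int s * int (d j) + int (d i) * A i j = 0" by (simp only: of_int_eq_0_iff)
  then show ?thesis by linarith
qed

lemma t_facts:
  assumes datum: "cartan_superdatum A d alpha h Iodd"
    and frm: "compatible_form form alpha h d"
    and Q: "Q_param form alpha A Iodd t"
  shows "finite {(r, s). t i j r s \<noteq> 0}"
    and "t i j r s \<noteq> 0 \<Longrightarrow> i \<noteq> j \<Longrightarrow> s \<le> nat (- A j i) \<and> (s = nat (- A j i) \<longrightarrow> r = 0)"
    and "i \<noteq> j \<Longrightarrow> t i j 0 (nat (- A j i)) \<noteq> 0"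
proof -
  have dpos: "d x > 0" for x using datum unfolding cartan_superdatum_def by simp
  have Anp: "x \<noteq> y \<Longrightarrow> A x y \<le> 0" for x y using datum unfolding cartan_superdatum_def by simp
  have sym: "int (d x) * A x y = int (d y) * A y x" for x y using datum unfolding cartan_superdatum_def by simp
  let ?M = "nat (- (int (d i) * A i j))"
  have "{(r, s). t i j r s \<noteq> 0} \<subseteq> {..?M} \<times> {..?M}"
  proof clarify
    fix r s assume "t i j r s \<noteq> 0"
    then have eq: "int r * int (d i) + int s * int (d j) = - (int (d i) * A i j)"
      by (rule t_eq[OF datum frm Q])
    have "int r \<le> int r * int (d i)" "int s \<le> int s * int (d j)"
      using dpos[of i] dpos[of j] by (simp_all add: mult_le_cancel_left1)
    moreover have "0 \<le> int r * int (d i)" "0 \<le> int s * int (d j)" by simp_all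
    ultimately show "r \<in> {..?M} \<and> s \<in> {..?M}" using eq by auto
  qed
  then show "finite {(r, s). t i j r s \<noteq> 0}" by (rule finite_subset) simp
  show "t i j r s \<noteq> 0 \<Longrightarrow> i \<noteq> j \<Longrightarrow> s \<le> nat (- A j i) \<and> (s = nat (- A j i) \<longrightarrow> r = 0)"
  proof -
    assume nz: "t i j r s \<noteq> 0" and ij: "i \<noteq> j"
    have eq: "int r * int (d i) + int s * int (d j) = - (int (d j) * A j i)"
      using t_eq[OF datum frm Q nz] sym[of i j] by simp
    have "0 \<le> int r * int (d i)" by simp
    moreover have "(- A j i) * int (d j) = - (int (d j) * A j i)" by simp
    ultimately have "int s * int (d j) \<le> (- A j i) * int (d j)" using eq by linarith
    then have le: "int s \<le> - A j i" by (rule mult_right_le_imp_le) (use dpos[of j] in simp)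
    moreover have "s = nat (- A j i) \<Longrightarrow> r = 0"
    proof -
      assume "s = nat (- A j i)"
      then have "int s = - A j i" using Anp[of j i] ij by auto
      then have "int r * int (d i) = 0" using eq by (simp add: algebra_simps)
      then show "r = 0" using dpos[of i] by simp
    qed
    ultimately show ?thesis by auto
  qed
  show "i \<noteq> j \<Longrightarrow> t i j 0 (nat (- A j i)) \<noteq> 0"
  proof -
    assume ij: "i \<noteq> j"
    have "t i j 0 (nat (- A j i)) = t j i (nat (- A j i)) 0" using Q unfolding Q_param_def by blast
    moreover have "\<forall>i j. i \<noteq> j \<longrightarrow> t i j (nat (- A i j)) 0 \<noteq> 0" using Q unfolding Q_param_def by blast
    then have "t j i (nat (- A j i)) 0 \<noteq> 0" using ij by auto
    ultimately show ?thesis by simp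
  qed
qed





theorem lemma4p18:
  fixes A :: "'i \<Rightarrow> 'i \<Rightarrow> int" and d :: "'i \<Rightarrow> nat" and Iodd :: "'i set"
    and alpha :: "'i \<Rightarrow> ('b \<Rightarrow>\<^sub>0 int)" and h :: "'i \<Rightarrow> ('b \<Rightarrow>\<^sub>0 int) \<Rightarrow> int"
    and form :: "('b \<Rightarrow>\<^sub>0 int) \<Rightarrow> ('b \<Rightarrow>\<^sub>0 int) \<Rightarrow> rat"
    and t :: "'i \<Rightarrow> 'i \<Rightarrow> nat \<Rightarrow> nat \<Rightarrow> 'k::field"
    and Lam :: "'b \<Rightarrow>\<^sub>0 int" and p :: nat and b :: "nat \<Rightarrow> nat" and nus :: "nat \<Rightarrow> 'i"
  assumes char: "(2::'k) \<noteq> 0"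
    and datum: "cartan_superdatum A d alpha h Iodd"
    and frm: "compatible_form form alpha h d"
    and Q: "Q_param form alpha A Iodd t"
    and dom: "\<forall>i. h i Lam \<ge> 0"
    and bpos: "\<forall>i\<in>{1..p}. b i \<ge> 1"
    and dist: "inj_on nus {1..p}"
  shows
    "let n = (\<Sum>i=1..p. b i);
         c = (\<lambda>j. \<Sum>l=1..j. b l);
         nut = concat (map (\<lambda>i. replicate (b i) (nus i)) [1..<p + 1]);
         \<beta> = (\<Sum>i=1..p. zsmul (int (b i)) (alpha (nus i)))
     in \<forall>i\<in>{1..p}.
          \<exists>coef :: nat \<Rightarrow> ('i, 'k) fa.
            let N = nat (h (nus i) (Lam - (\<Sum>j=1..c (i - 1). alpha (nth1 nut j))))
            in (\<forall>k\<le>N. coef k \<in> fa_over (Xgens (c (i - 1)))) \<and>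
               pol_unit Iodd (take (c (i - 1)) nut) (coef N) \<and>
               (\<Sum>k\<le>N. coef k \<odot> fa_pow (fa_x (c (i - 1) + 1)) k) \<odot> fa_e nut
                 \<in> cyc_ideal Iodd t (\<lambda>j. h j Lam) n (Ibeta alpha n \<beta>)"
proof -
  define n where "n = (\<Sum>i=1..p. b i)"
  define c where "c = (\<lambda>j. \<Sum>l=1..j. b l)"
  define L where "L = (\<lambda>i. replicate (b i) (nus i))"
  define nut where "nut = concat (map L [1..<p + 1])"
  define \<beta> where "\<beta> = (\<Sum>i=1..p. zsmul (int (b i)) (alpha (nus i)))"
  define lam where "lam = (\<lambda>j. h j Lam)"
  define Ib where "Ib = Ibeta alpha n \<beta>"
  have hadd: "\<forall>x y. h i (x + y) = h i x + h i y" for i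
    using datum unfolding cartan_superdatum_def by blast
  have hA: "h i (alpha j) = A i j" for i j
    using datum unfolding cartan_superdatum_def by blast
  have Anp0: "\<forall>i j. i \<noteq> j \<longrightarrow> A i j \<le> 0"
    using datum by (simp add: cartan_superdatum_def)
  have Anp: "i \<noteq> j \<Longrightarrow> A i j \<le> 0" for i j using Anp0 by blast
  interpret klr Iodd t lam n Ib A
  proof
    show "\<nu> \<in> Ib \<Longrightarrow> 1 \<le> a \<Longrightarrow> a < n \<Longrightarrow> swap1 a \<nu> \<in> Ib" for \<nu> a
      unfolding Ib_def by (rule Ibeta_swap)
    show "\<nu> \<in> Ib \<Longrightarrow> length \<nu> = n" for \<nu> by (simp add: Ib_def Ibeta_def)
    show "finite {(r, s). t i j r s \<noteq> 0}" for i j by (rule t_facts(1)[OF datum frm Q])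
    show "t i j r s \<noteq> 0 \<Longrightarrow> i \<noteq> j \<Longrightarrow> s \<le> nat (- A j i) \<and> (s = nat (- A j i) \<longrightarrow> r = 0)" for i j r s
      by (rule t_facts(2)[OF datum frm Q])
    show "i \<noteq> j \<Longrightarrow> t i j 0 (nat (- A j i)) \<noteq> 0" for i j by (rule t_facts(3)[OF datum frm Q])
    show "0 \<le> lam i" for i using dom by (simp add: lam_def)
    show "i \<noteq> j \<Longrightarrow> A i j \<le> 0" for i j by (rule Anp)
  qed
  have lennut: "length nut = n"
    unfolding nut_def L_def n_def blocks_len by (simp add: atLeastLessThanSuc_atLeastAtMost)
  have "(\<Sum>s<n. alpha (nut ! s)) = sum_list (map alpha nut)" by (rule sum_nth_list[OF lennut])
  also have "\<dots> = \<beta>" unfolding nut_def L_def \<beta>_def by (rule blocks_alpha)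
  finally have nutIb: "nut \<in> Ib"
    unfolding Ib_def Ibeta_def using lennut by simp
  have goal: "\<exists>coef :: nat \<Rightarrow> ('i, 'k) fa.
            (\<forall>k\<le>nat (h (nus i) (Lam - (\<Sum>j=1..c (i - 1). alpha (nth1 nut j)))). coef k \<in> fa_over (Xgens (c (i - 1)))) \<and>
               pol_unit Iodd (take (c (i - 1)) nut) (coef (nat (h (nus i) (Lam - (\<Sum>j=1..c (i - 1). alpha (nth1 nut j)))))) \<and>
               (\<Sum>k\<le>nat (h (nus i) (Lam - (\<Sum>j=1..c (i - 1). alpha (nth1 nut j)))). coef k \<odot> fa_pow (fa_x (c (i - 1) + 1)) k) \<odot> fa_e nut
                 \<in> cyc_ideal Iodd t lam n Ib"
    if i: "i \<in> {1..p}" for i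
  proof -
    define P where "P = concat (map L [1..<i])"
    define Sf where "Sf = concat (map L [Suc i..<p + 1])"
    have nsplit: "nut = P @ L i @ Sf" unfolding nut_def P_def Sf_def using i by (intro blocks_split) auto
    have lenP: "length P = c (i - 1)"
      unfolding P_def L_def blocks_len c_def using i
      by (cases i) (auto simp: atLeastLessThanSuc_atLeastAtMost)
    have setP: "set P \<subseteq> nus ` {1..<i}" unfolding P_def L_def by (rule blocks_set)
    have "b i \<ge> 1" using bpos i by blast
    then have Li: "L i = nus i # replicate (b i - 1) (nus i)"
      unfolding L_def by (cases "b i") auto
    define k where "k = c (i - 1) + 1"
    have k1: "1 \<le> k" by (simp add: k_def)
    have kn: "k \<le> n" using lennut nsplit lenP Li by (auto simp: k_def)
    have nk: "nth1 nut k = nus i"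
      unfolding nsplit nth1_def k_def using lenP Li by (simp add: nth_append)
    have nj: "nth1 nut j \<in> nus ` {1..<i}" if "1 \<le> j" "j < k" for j
    proof -
      have jl: "j - 1 < length P" using that lenP k_def by simp
      then have "nth1 nut j = P ! (j - 1)" unfolding nsplit nth1_def by (simp add: nth_append)
      moreover note jl
      ultimately show ?thesis using setP by (metis nth_mem subsetD)
    qed
    have distk: "\<forall>j. 1 \<le> j \<and> j < k \<longrightarrow> nth1 nut j \<noteq> nth1 nut k"
    proof (intro allI impI)
      fix j assume j: "1 \<le> j \<and> j < k"
      then obtain l where l: "l \<in> {1..<i}" "nth1 nut j = nus l" using nj by blast
      have "nus l \<noteq> nus i" using dist i l(1) by (auto dest: inj_onD)
      then show "nth1 nut j \<noteq> nth1 nut k" using l nk by simp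
    qed
    obtain coef c0 where c0: "c0 \<noteq> 0" "coef (NN nut k) = sc c0"
      and cf: "\<forall>j\<le>NN nut k. coef j \<in> fa_over (Xgens (k - 1))"
      and mem: "(\<Sum>j\<le>NN nut k. coef j * fa_x k ^ j) * fa_e nut \<in> II"
      using claim[OF k1 kn nutIb distk] by blast
    have NN: "nat (h (nus i) (Lam - (\<Sum>j=1..c (i - 1). alpha (nth1 nut j)))) = NN nut k"
    proof -
      have "h (nus i) (\<Sum>j=1..c (i - 1). alpha (nth1 nut j)) = (\<Sum>j=1..c (i - 1). A (nus i) (nth1 nut j))"
        using h_hom(4)[OF hadd, of "nus i" "\<lambda>j. alpha (nth1 nut j)" "{1..c (i - 1)}"] by (simp add: hA)
      then show ?thesis
        unfolding NN_def nk using h_hom(3)[OF hadd] by (simp add: k_def lam_def)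
    qed
    have pu: "pol_unit Iodd (take (c (i - 1)) nut) (sc c0)"
    proof -
      have lt: "length (take (c (i - 1)) nut) = c (i - 1)" using lenP nsplit by simp
      have "sc (inverse c0) * sc c0 - 1 = (0 :: ('i, 'k) fa)" "sc c0 * sc (inverse c0) - 1 = (0 :: ('i, 'k) fa)"
        using c0(1) by (simp_all add: sc_mult)
      then show ?thesis unfolding pol_unit_def lt
        by (auto intro!: bexI[of _ "sc (inverse c0)"] fa_ideal.zero)
    qed
    show ?thesis
      using c0 cf mem pu unfolding NN
      by (intro exI[of _ coef]) (simp add: k_def cyc_ideal_def)
  qed
  show ?thesis
    unfolding Let_def
    using goal unfolding n_def c_def nut_def L_def \<beta>_def Ib_def lam_def by blast
qed


end
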